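(* Let $m\ge3$ be odd, let $s$ be an even positive integer not divisible by $4$, $n=sm$, and $\Gamma=C_n[mK_1]$. Define $$\sigma_1=(1,1,\dots,1,tc^{-1})r,\qquad \sigma_2=(t,\beta_2,\beta_3,\dots,\beta_n)z,\qquad G=\langle\sigma_1,\sigma_2\rangle,$$ where for $2\le i\le n$, $\beta_i=c$ if $i\equiv0$ or $3\pmod 4$ and $\beta_i=c^{-1}$ if $i\equiv1$ or $2\pmod4$ (so $\sigma_2=(t,c^{-1},c,c,c^{-1},c^{-1},\dots,c,c,c^{-1},c^{-1})z$). Then $\sigma_1$ has order $2n$, $\sigma_2$ has order $2m$, $\sigma_1\sigma_2$ has order $2$, and $|G|=4m^2n$.
   Context: $C_n[mK_1]$ is the graph with vertex set $\{1,\dots,n\}\times\{1,\dots,m\}$ in which $(i_1,j_1)$ is adjacent to $(i_2,j_2)$ if and only if $i_1\equiv i_2\pm1\pmod n$ (residues mod $n$ taken in $\{1,\dots,n\}$). Permutations act on the right ($x\alpha$ is the image of $x$) and products are composed left to right, both in $S_m$ and in $\mathrm{Aut}(\Gamma)$. For $\alpha_1,\dots,\alpha_n\in S_m$ and a permutation $x$ of $\{1,\dots,n\}$ in the dihedral group $D_n=\langle r,z\rangle$, $(\alpha_1,\dots,\alpha_n)x$ denotes the automorphism of $\Gamma$ mapping $(i,j)\mapsto(ix,\,j\alpha_i)$; $1$ denotes an identity permutation. Here $c=(1\,2\,\cdots\,m)\in S_m$; $t\in S_m$ fixes $1$ and maps $j\mapsto m-j+2$ for $2\le j\le m$; $r$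 is the permutation $i\mapsto i+1 \pmod n$ of $\{1,\dots,n\}$; and $z$ fixes $1$ and maps $j\mapsto n-j+2$ for $2\le j\le n$. *)

theory Defs
  imports "HOL-Algebra.Bij" "HOL-Algebra.Generated_Groups" "HOL-Algebra.Multiplicative_Group"
begin

text \<open>Vertex set of C_n[mK_1]: {1..n} x {1..m}.  Permutations of {1..m} and of {1..n}
  are represented as functions nat => nat (only their values on the relevant range matter).\<close>

definition vset :: "nat \<Rightarrow> nat \<Rightarrow> (nat \<times> nat) set" where
  "vset n m = {1..n} \<times> {1..m}"

text \<open>Product of permutations composed left to right (right action): x (a b) = (x a) b.\<close>
definition pmul :: "(nat \<Rightarrow> nat) \<Rightarrow> (nat \<Rightarrow> nat) \<Rightarrow> (nat \<Rightarrow> nat)" where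
  "pmul a b = b \<circ> a"

definition cperm :: "nat \<Rightarrow> nat \<Rightarrow> nat" where
  "cperm m j = j mod m + 1"

definition cinv :: "nat \<Rightarrow> nat \<Rightarrow> nat" where
  "cinv m j = (j + m - 2) mod m + 1"

definition tperm :: "nat \<Rightarrow> nat \<Rightarrow> nat" where
  "tperm m j = (if j = 1 then 1 else m + 2 - j)"

definition rperm :: "nat \<Rightarrow> nat \<Rightarrow> nat" where
  "rperm n i = i mod n + 1"

definition zperm :: "nat \<Rightarrow> nat \<Rightarrow> nat" where
  "zperm n i = (if i = 1 then 1 else n + 2 - i)"

text \<open>The automorphism (alpha_1,...,alpha_n) x : (i,j) -> (i x, j alpha_i),
  as an element of the symmetric group on the vertex set (extensional).\<close>
definition aut :: "nat \<Rightarrow> nat \<Rightarrow> (nat \<Rightarrow> nat \<Rightarrow> nat) \<Rightarrow> (nat \<Rightarrow> nat)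
                    \<Rightarrow> (nat \<times> nat \<Rightarrow> nat \<times> nat)" where
  "aut n m \<alpha> x = (\<lambda>v \<in> vset n m. (x (fst v), \<alpha> (fst v) (snd v)))"

definition sigma1 :: "nat \<Rightarrow> nat \<Rightarrow> (nat \<times> nat \<Rightarrow> nat \<times> nat)" where
  "sigma1 n m = aut n m (\<lambda>i. if i = n then pmul (tperm m) (cinv m) else id) (rperm n)"

definition beta :: "nat \<Rightarrow> nat \<Rightarrow> nat \<Rightarrow> nat" where
  "beta m i = (if i mod 4 = 0 \<or> i mod 4 = 3 then cperm m else cinv m)"

definition sigma2 :: "nat \<Rightarrow> nat \<Rightarrow> (nat \<times> nat \<Rightarrow> nat \<times> nat)" where
  "sigma2 n m = aut n m (\<lambda>i. if i = 1 then tperm m else beta m i) (zperm n)"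

end

theory Submission
  imports Defs
begin

definition Wf :: "int \<Rightarrow> int \<Rightarrow> int \<Rightarrow> int \<Rightarrow> int" where
  "Wf h a b I = (if I mod 4 = 0 then a else if I mod 4 = 1 then b
                 else if I mod 4 = 2 then h - 1 - a else h - 1 - b)"

type_synonym prm = "int \<times> int \<times> int \<times> (int \<Rightarrow> int)"

definition Lc :: "nat \<Rightarrow> nat \<Rightarrow> prm \<Rightarrow> int \<times> int \<Rightarrow> int \<times> int" where
  "Lc n m P x = (case P of (e,A,h,w) \<Rightarrow>
      ((e * fst x + A) mod (2 * int n), (h * snd x + w (fst x)) mod int m))"

definition prj :: "nat \<Rightarrow> nat \<Rightarrow> int \<times> int \<Rightarrow> nat \<times> nat" where
  "prj n m x = (if fst x < int n then (nat (fst x + 1), nat (snd x + 1))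
     else (nat (fst x - int n + 1), nat ((- snd x - 1) mod int m + 1)))"

definition Fm :: "nat \<Rightarrow> nat \<Rightarrow> prm \<Rightarrow> nat \<times> nat \<Rightarrow> nat \<times> nat" where
  "Fm n m P = (\<lambda>v \<in> vset n m. prj n m (Lc n m P (int (fst v) - 1, int (snd v) - 1)))"

definition pmult :: "prm \<Rightarrow> prm \<Rightarrow> prm" where
  "pmult P Q = (case P of (e2,A2,h2,w2) \<Rightarrow> case Q of (e1,A1,h1,w1) \<Rightarrow>
      (e2*e1, e2*A1 + A2, h2*h1, \<lambda>I. h2 * w1 I + w2 (e1*I + A1)))"

definition pinv :: "prm \<Rightarrow> prm" where
  "pinv P = (case P of (e,A,h,w) \<Rightarrow> (e, - e*A, h, \<lambda>K. - h * w (e * (K - A))))"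

definition valid :: "prm \<Rightarrow> bool" where
  "valid P = (case P of (e,A,h,w) \<Rightarrow> (e = 1 \<or> e = -1) \<and> (h = 1 \<or> h = -1)
       \<and> (\<forall>I. w (I + 2) = h - 1 - w I))"

definition pid :: prm where "pid = (1, 0, 1, \<lambda>_. 0)"

definition rng :: "nat \<Rightarrow> nat \<Rightarrow> (int \<times> int) set" where
  "rng n m = {0..<2 * int n} \<times> {0..<int m}"

lemma valid_per4:
  assumes "\<forall>I::int. (w::int\<Rightarrow>int) (I + 2) = h - 1 - w I"
  shows "w (I + 4) = w I"
proof -
  have "w (I + 2 + 2) = h - 1 - w (I + 2)" using assms by blast
  then have "w (I + 4) = h - 1 - w (I + 2)" by (simp add: add.assoc)
  then show ?thesis using assms by simp
qed

lemma valid_per4k: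
  assumes "\<forall>I::int. (w::int\<Rightarrow>int) (I + 2) = h - 1 - w I"
  shows "w (I + 4 * k) = w I"
proof -
  have pos: "w (I + 4 * int j) = w I" for j I
  proof (induction j arbitrary: I)
    case 0 then show ?case by simp
  next
    case (Suc j)
    have "I + 4 * int (Suc j) = (I + 4 * int j) + 4" by simp
    then show ?case using valid_per4[OF assms, of "I + 4 * int j"] Suc by (simp add: algebra_simps)
  qed
  show ?thesis
  proof (cases "k \<ge> 0")
    case True then show ?thesis using pos[of I "nat k"] by simp
  next
    case False
    have "w (I + 4*k + 4 * int (nat (-k))) = w (I + 4*k)" by (rule pos)
    then show ?thesis using False by simp
  qed
qed

lemma valid_mod4:
  assumes "\<forall>I::int. (w::int\<Rightarrow>int) (I + 2) = h - 1 - w I"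
  shows "w I = w (I mod 4)"
  using valid_per4k[OF assms, of "I mod 4" "I div 4"] by simp

lemma valid_Wf:
  assumes "\<forall>I::int. (w::int\<Rightarrow>int) (I + 2) = h - 1 - w I"
  shows "w I = Wf h (w 0) (w 1) I"
proof -
  have "I mod 4 = 0 \<or> I mod 4 = 1 \<or> I mod 4 = 2 \<or> I mod 4 = 3" by presburger
  moreover have "w 2 = h - 1 - w 0" "w 3 = h - 1 - w 1"
    using assms[rule_format, of 0] assms[rule_format, of 1] by auto
  ultimately show ?thesis using valid_mod4[OF assms, of I] unfolding Wf_def by auto
qed

lemma Wf_valid: "\<forall>I. Wf h a b (I + 2) = h - 1 - Wf h a b I"
  unfolding Wf_def by (auto, presburger+)

locale cov = fixes n m :: nat
  assumes n4: "n mod 4 = 2" and n2: "n > 2" and m3: "m \<ge> 3" and modd: "odd m"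
begin

lemma n_eq: "int n = 4 * int (n div 4) + 2"
proof -
  have "n = 4 * (n div 4) + 2" using n4 by presburger
  then show ?thesis by (metis of_nat_add of_nat_mult of_nat_numeral)
qed

lemma w_mod2n:
  assumes "\<forall>I::int. (w::int\<Rightarrow>int) (I + 2) = h - 1 - w I"
  shows "w (x mod (2 * int n)) = w x"
proof -
  have e: "x = x mod (2 * int n) + 4 * ((2 * int (n div 4) + 1) * (x div (2 * int n)))"
  proof -
    have q: "2 * int n = 4 * (2 * int (n div 4) + 1)" using n_eq by simp
    have "x = x mod (2 * int n) + (2 * int n) * (x div (2 * int n))" by simp
    then show ?thesis unfolding q by (simp add: algebra_simps)
  qed
  show ?thesis by (subst (2) e) (rule valid_per4k[OF assms, symmetric])
qed

lemma w_plus_n: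
  assumes "\<forall>I::int. (w::int\<Rightarrow>int) (I + 2) = h - 1 - w I"
  shows "w (x + int n) = h - 1 - w x" "w (x - int n) = h - 1 - w x"
proof -
  have "w (x + int n) = w (x + 2 + 4 * int (n div 4))" using n_eq by (simp add: algebra_simps)
  also have "\<dots> = w (x + 2)" by (rule valid_per4k[OF assms])
  finally show "w (x + int n) = h - 1 - w x" using assms by simp
  have "w (x - int n) = w (x + 2 + 4 * (- int (n div 4) - 1))" using n_eq by (simp add: algebra_simps)
  also have "\<dots> = w (x + 2)" by (rule valid_per4k[OF assms])
  finally show "w (x - int n) = h - 1 - w x" using assms by simp
qed

lemma w_plus_2e:
  assumes "\<forall>I::int. (w::int\<Rightarrow>int) (I + 2) = h - 1 - w I" and "e = 1 \<or> e = -1"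
  shows "w (x + 2 * e) = h - 1 - w x"
  using assms(2)
proof
  assume "e = 1" then show ?thesis using assms(1) by simp
next
  assume "e = -1"
  then have "w (x + 2 * e) = w (x - 2)" by simp
  also have "\<dots> = h - 1 - w x" using assms(1)[rule_format, of "x - 2"] by simp
  finally show ?thesis .
qed

lemma Lc_comp:
  assumes "valid P"
  shows "Lc n m P (Lc n m Q x) = Lc n m (pmult P Q) x"
proof -
  obtain e2 A2 h2 w2 where P: "P = (e2,A2,h2,w2)" by (cases P) auto
  obtain e1 A1 h1 w1 where Q: "Q = (e1,A1,h1,w1)" by (cases Q) auto
  have w2: "\<forall>I::int. w2 (I + 2) = h2 - 1 - w2 I" using assms P by (simp add: valid_def)
  obtain I J where x: "x = (I, J)" by (cases x) auto
  define N where "N = 2 * int n"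
  have 1: "(e2 * ((e1 * I + A1) mod N) + A2) mod N = (e2 * e1 * I + (e2 * A1 + A2)) mod N"
  proof -
    have "(e2 * ((e1 * I + A1) mod N) + A2) mod N = (e2 * (e1 * I + A1) + A2) mod N"
      by (metis mod_add_left_eq mod_mult_right_eq)
    then show ?thesis by (simp add: algebra_simps)
  qed
  have 2: "(h2 * ((h1 * J + w1 I) mod int m) + w2 ((e1 * I + A1) mod N)) mod int m
      = (h2 * h1 * J + (h2 * w1 I + w2 (e1 * I + A1))) mod int m"
  proof -
    have "(h2 * ((h1 * J + w1 I) mod int m) + w2 ((e1 * I + A1) mod N)) mod int m
       = (h2 * (h1 * J + w1 I) + w2 (e1 * I + A1)) mod int m"
      unfolding N_def w_mod2n[OF w2] by (metis mod_add_left_eq mod_mult_right_eq)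
    then show ?thesis by (simp add: algebra_simps)
  qed
  show ?thesis
    unfolding P Q x Lc_def pmult_def using 1 2 by (simp add: N_def)
qed

lemma mpos: "int m > 0" and npos: "int n > 0" using m3 n2 by auto

lemma hi_mod: "int n \<le> I \<Longrightarrow> I < 2 * int n \<Longrightarrow> (I + int n) mod (2 * int n) = I - int n"
proof -
  assume a: "int n \<le> I" "I < 2 * int n"
  have "I + int n = (I - int n) + 1 * (2 * int n)" by simp
  then have "(I + int n) mod (2 * int n) = (I - int n) mod (2 * int n)" by (metis mod_mult_self1)
  then show ?thesis using a by simp
qed

lemma Lc_rng: "Lc n m P x \<in> rng n m"
  using mpos npos by (cases P) (auto simp: Lc_def rng_def)

lemma neg_mod_m: "0 \<le> J \<Longrightarrow> J < int m \<Longrightarrow> (- ((- J - 1) mod int m) - 1) mod int m = J"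
proof -
  assume a: "0 \<le> J" "J < int m"
  have "(- ((- J - 1) mod int m) - 1) mod int m = (- (- J - 1) - 1) mod int m"
    by (metis mod_diff_left_eq mod_minus_eq)
  then show ?thesis using a by simp
qed

lemma prj_tau:
  assumes "x \<in> rng n m"
  shows "prj n m ((fst x + int n) mod (2 * int n), (- snd x - 1) mod int m) = prj n m x"
proof -
  obtain I J where x: "x = (I, J)" by (cases x) auto
  have r: "0 \<le> I" "I < 2 * int n" "0 \<le> J" "J < int m" using assms x by (auto simp: rng_def)
  show ?thesis
  proof (cases "I < int n")
    case True
    then have "(I + int n) mod (2 * int n) = I + int n" using r by simp
    then show ?thesis using True r neg_mod_m[OF r(3,4)] by (simp add: x prj_def)
  next
    case False
    then have "(I + int n) mod (2 * int n) = I - int n"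
      using r by (intro hi_mod) auto
    then show ?thesis using False r by (simp add: x prj_def)
  qed
qed

lemma Lc_tau:
  assumes "valid P"
  shows "Lc n m P ((I + int n) mod (2 * int n), (- J - 1) mod int m)
    = ((fst (Lc n m P (I,J)) + int n) mod (2 * int n), (- snd (Lc n m P (I,J)) - 1) mod int m)"
proof -
  obtain e A h w where P: "P = (e,A,h,w)" by (cases P) auto
  have w: "\<forall>I::int. w (I + 2) = h - 1 - w I" and e: "e = 1 \<or> e = -1" and h: "h = 1 \<or> h = -1"
    using assms P by (auto simp: valid_def)
  define N where "N = 2 * int n"
  have 1: "(e * ((I + int n) mod N) + A) mod N = ((e * I + A) mod N + int n) mod N"
  proof -
    have "(e * ((I + int n) mod N) + A) mod N = (e * (I + int n) + A) mod N"
      by (metis mod_add_left_eq mod_mult_right_eq)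
    also have "\<dots> = (e * I + A + int n) mod N"
      using e
    proof
      assume "e = -1"
      then have "e * (I + int n) + A = (e * I + A + int n) + (-1) * N" by (simp add: N_def)
      then show ?thesis by (metis mod_mult_self1)
    qed (simp add: algebra_simps)
    also have "\<dots> = ((e * I + A) mod N + int n) mod N" by (simp add: mod_simps)
    finally show ?thesis .
  qed
  have 2: "(h * ((- J - 1) mod int m) + w ((I + int n) mod N)) mod int m
     = (- ((h * J + w I) mod int m) - 1) mod int m"
  proof -
    have "(h * ((- J - 1) mod int m) + w ((I + int n) mod N)) mod int m
        = (h * (- J - 1) + w (I + int n)) mod int m"
      unfolding N_def w_mod2n[OF w] by (metis mod_add_left_eq mod_mult_right_eq)
    also have "\<dots> = (- (h * J + w I) - 1) mod int m"
    proof -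
      have "h * (- J - 1) + w (I + int n) = - (h * J + w I) - 1"
        unfolding w_plus_n(1)[OF w] by (simp add: algebra_simps)
      then show ?thesis by simp
    qed
    also have "\<dots> = (- ((h * J + w I) mod int m) - 1) mod int m"
      by (metis mod_diff_left_eq mod_minus_eq)
    finally show ?thesis .
  qed
  show ?thesis using 1 2 by (simp add: P Lc_def N_def)
qed

lemma prj_vset: "x \<in> rng n m \<Longrightarrow> prj n m x \<in> vset n m"
proof -
  assume x: "x \<in> rng n m"
  obtain a b where ab: "x = (a, b)" by (cases x) auto
  have "(- b - 1) mod int m + 1 \<le> int m" using pos_mod_bound[OF mpos, of "-b-1"] by linarith
  moreover have "0 \<le> (- b - 1) mod int m" using mpos by auto
  ultimately show ?thesis using x ab by (auto simp: rng_def prj_def vset_def nat_le_iff le_nat_iff)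
qed

lemma vset_rng:
  assumes "v \<in> vset n m"
  shows "(int (fst v) - 1, int (snd v) - 1) \<in> rng n m"
    and "prj n m (int (fst v) - 1, int (snd v) - 1) = v"
  using assms by (cases v, auto simp: rng_def prj_def vset_def)+

lemma Fm_equiv:
  assumes "valid P" "x \<in> rng n m"
  shows "Fm n m P (prj n m x) = prj n m (Lc n m P x)"
proof -
  obtain I J where x: "x = (I, J)" by (cases x) auto
  have r: "0 \<le> I" "I < 2 * int n" "0 \<le> J" "J < int m" using assms x by (auto simp: rng_def)
  have pv: "prj n m x \<in> vset n m" using prj_vset assms by auto
  show ?thesis
  proof (cases "I < int n")
    case True
    then show ?thesis using pv r by (simp add: Fm_def x prj_def)
  next
    case False
    have a: "(I + int n) mod (2 * int n) = I - int n"
      using False r by (intro hi_mod) auto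
    have "Fm n m P (prj n m x) = prj n m (Lc n m P (I - int n, (- J - 1) mod int m))"
      using pv False r mpos by (simp add: Fm_def x prj_def)
    also have "\<dots> = prj n m (Lc n m P ((I + int n) mod (2 * int n), (- J - 1) mod int m))"
      using a by simp
    also have "\<dots> = prj n m (Lc n m P x)"
      unfolding Lc_tau[OF assms(1)] x using prj_tau[OF Lc_rng] by simp
    finally show ?thesis .
  qed
qed

lemma Fm_comp:
  assumes "valid P"
  shows "compose (vset n m) (Fm n m P) (Fm n m Q) = Fm n m (pmult P Q)"
proof
  fix v
  show "compose (vset n m) (Fm n m P) (Fm n m Q) v = Fm n m (pmult P Q) v"
  proof (cases "v \<in> vset n m")
    case True
    define x where "x = (int (fst v) - 1, int (snd v) - 1)"
    have x: "x \<in> rng n m" "prj n m x = v" using vset_rng[OF True] by (auto simp: x_def)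
    have "Fm n m Q v = prj n m (Lc n m Q x)" using True by (simp add: Fm_def x_def)
    then have "Fm n m P (Fm n m Q v) = prj n m (Lc n m P (Lc n m Q x))"
      using Fm_equiv[OF assms Lc_rng] by simp
    also have "\<dots> = Fm n m (pmult P Q) v" using True by (simp add: Fm_def x_def Lc_comp[OF assms])
    finally show ?thesis using True by (simp add: compose_def)
  next
    case False then show ?thesis by (simp add: compose_def Fm_def)
  qed
qed

lemma valid_pmult:
  assumes "valid P" "valid Q"
  shows "valid (pmult P Q)"
proof -
  obtain e2 A2 h2 w2 where P: "P = (e2,A2,h2,w2)" by (cases P) auto
  obtain e1 A1 h1 w1 where Q: "Q = (e1,A1,h1,w1)" by (cases Q) auto
  have w2: "\<forall>I::int. w2 (I + 2) = h2 - 1 - w2 I" and w1: "\<forall>I::int. w1 (I + 2) = h1 - 1 - w1 I"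
    and e: "e1 = 1 \<or> e1 = -1" "e2 = 1 \<or> e2 = -1" and h: "h1 = 1 \<or> h1 = -1" "h2 = 1 \<or> h2 = -1"
    using assms P Q by (auto simp: valid_def)
  have "h2 * w1 (I + 2) + w2 (e1 * (I + 2) + A1) = h2 * h1 - 1 - (h2 * w1 I + w2 (e1 * I + A1))" for I
  proof -
    have "w2 (e1 * (I + 2) + A1) = w2 ((e1 * I + A1) + 2 * e1)" by (simp add: algebra_simps)
    also have "\<dots> = h2 - 1 - w2 (e1 * I + A1)" by (rule w_plus_2e[OF w2 e(1)])
    finally have a: "w2 (e1 * (I + 2) + A1) = h2 - 1 - w2 (e1 * I + A1)" .
    have b: "w1 (I + 2) = h1 - 1 - w1 I" using w1 by simp
    show ?thesis unfolding a b by (simp add: algebra_simps)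
  qed
  then show ?thesis using e h by (auto simp: P Q pmult_def valid_def)
qed

lemma valid_pinv:
  assumes "valid P"
  shows "valid (pinv P)"
proof -
  obtain e A h w where P: "P = (e,A,h,w)" by (cases P) auto
  have w: "\<forall>I::int. w (I + 2) = h - 1 - w I" and e: "e = 1 \<or> e = -1" and h: "h = 1 \<or> h = -1"
    using assms P by (auto simp: valid_def)
  have hh: "h * h = 1" using h by auto
  have "- h * w (e * (K + 2 - A)) = h - 1 - (- h * w (e * (K - A)))" for K
  proof -
    have "w (e * (K + 2 - A)) = w (e * (K - A) + 2 * e)" by (simp add: algebra_simps)
    also have "\<dots> = h - 1 - w (e * (K - A))" by (rule w_plus_2e[OF w e])
    finally have a: "w (e * (K + 2 - A)) = h - 1 - w (e * (K - A))" .
    show ?thesis unfolding a using h by auto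
  qed
  then show ?thesis using e h by (auto simp: P pinv_def valid_def)
qed

lemma pinv_l: "valid P \<Longrightarrow> pmult (pinv P) P = pid"
proof -
  assume v: "valid P"
  obtain e A h w where P: "P = (e,A,h,w)" by (cases P) auto
  have e: "e * e = 1" and h: "h * h = 1" using v P by (auto simp: valid_def)
  have "e * (e * I + A - A) = I" for I using e by (simp add: algebra_simps)
  then show ?thesis using e h by (simp add: P pinv_def pmult_def pid_def algebra_simps)
qed

lemma pinv_r: "valid P \<Longrightarrow> pmult P (pinv P) = pid"
proof -
  assume v: "valid P"
  obtain e A h w where P: "P = (e,A,h,w)" by (cases P) auto
  have e: "e * e = 1" and h: "h * h = 1" using v P by (auto simp: valid_def)
  have 1: "e * I - e * A = e * (I - A)" for I by (simp add: algebra_simps)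
  have 2: "e * (e * A) = A" using e by (simp add: mult.assoc[symmetric])
  show ?thesis using e h 2 by (simp add: P pinv_def pmult_def pid_def 1 mult.assoc[symmetric])
qed

lemma valid_pid: "valid pid" by (simp add: valid_def pid_def)

lemma Fm_pid: "Fm n m pid = (\<lambda>x \<in> vset n m. x)"
proof
  fix v show "Fm n m pid v = (\<lambda>x \<in> vset n m. x) v"
  proof (cases "v \<in> vset n m")
    case True
    have r: "(int (fst v) - 1, int (snd v) - 1) \<in> rng n m" using vset_rng[OF True] by simp
    then have "Lc n m pid (int (fst v) - 1, int (snd v) - 1) = (int (fst v) - 1, int (snd v) - 1)"
      by (auto simp: Lc_def pid_def rng_def)
    then show ?thesis using True vset_rng(2)[OF True] by (simp add: Fm_def)
  qed (simp add: Fm_def)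
qed

lemma Fm_Bij:
  assumes "valid P" shows "Fm n m P \<in> Bij (vset n m)"
proof -
  have into: "Fm n m Q ` vset n m \<subseteq> vset n m" for Q
  proof
    fix y assume "y \<in> Fm n m Q ` vset n m"
    then obtain v where v: "v \<in> vset n m" "y = Fm n m Q v" by auto
    then show "y \<in> vset n m" using prj_vset[OF Lc_rng] by (simp add: Fm_def)
  qed
  have l: "\<forall>v \<in> vset n m. Fm n m (pinv P) (Fm n m P v) = v"
  proof
    fix v assume v: "v \<in> vset n m"
    have "compose (vset n m) (Fm n m (pinv P)) (Fm n m P) v = Fm n m pid v"
      using Fm_comp[OF valid_pinv[OF assms], of P] pinv_l[OF assms] by simp
    then show "Fm n m (pinv P) (Fm n m P v) = v" using v by (simp add: compose_def Fm_pid)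
  qed
  have r: "\<forall>v \<in> vset n m. Fm n m P (Fm n m (pinv P) v) = v"
  proof
    fix v assume v: "v \<in> vset n m"
    have "compose (vset n m) (Fm n m P) (Fm n m (pinv P)) v = Fm n m pid v"
      using Fm_comp[OF assms, of "pinv P"] pinv_r[OF assms] by simp
    then show "Fm n m P (Fm n m (pinv P) v) = v" using v by (simp add: compose_def Fm_pid)
  qed
  have "bij_betw (Fm n m P) (vset n m) (vset n m)"
    by (rule bij_betw_byWitness[OF l r into into])
  then show ?thesis by (simp add: Bij_def Fm_def)
qed

abbreviation "BG \<equiv> BijGroup (vset n m)"

lemma grpBG: "group BG" by (rule group_BijGroup)

lemma Fm_mult: "valid P \<Longrightarrow> valid Q \<Longrightarrow> Fm n m P \<otimes>\<^bsub>BG\<^esub> Fm n m Q = Fm n m (pmult P Q)"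
  using Fm_Bij[of P] Fm_Bij[of Q] Fm_comp[of P Q] by (simp add: BijGroup_def)

lemma Fm_one: "\<one>\<^bsub>BG\<^esub> = Fm n m pid"
  by (simp add: BijGroup_def Fm_pid)

lemma Fm_carr: "valid P \<Longrightarrow> Fm n m P \<in> carrier BG"
  using Fm_Bij by (simp add: BijGroup_def)

lemma Fm_inv: "valid P \<Longrightarrow> inv\<^bsub>BG\<^esub> (Fm n m P) = Fm n m (pinv P)"
  by (rule group.inv_equality[OF grpBG]) (simp_all add: Fm_mult valid_pinv pinv_l Fm_one Fm_carr)

lemma Fm_cong:
  assumes "A mod (2 * int n) = A' mod (2 * int n)" "\<forall>I. w I mod int m = w' I mod int m"
  shows "Fm n m (e, A, h, w) = Fm n m (e, A', h, w')"
proof -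
  have "Lc n m (e, A, h, w) x = Lc n m (e, A', h, w') x" for x
  proof -
    have 1: "(e * fst x + A) mod (2 * int n) = (e * fst x + A') mod (2 * int n)"
      using assms(1) by (metis mod_add_right_eq)
    have 2: "(h * snd x + w (fst x)) mod int m = (h * snd x + w' (fst x)) mod int m"
      using assms(2) by (metis mod_add_right_eq)
    show ?thesis using 1 2 by (simp add: Lc_def)
  qed
  then show ?thesis by (simp add: Fm_def)
qed

lemma Fm_tauP: "Fm n m (e, A, h, w) = Fm n m (e, A + int n, - h, \<lambda>I. - w I - 1)"
proof -
  have "prj n m (Lc n m (e, A, h, w) x) = prj n m (Lc n m (e, A + int n, - h, \<lambda>I. - w I - 1) x)" for x
  proof -
    let ?L = "Lc n m (e, A, h, w) x"
    have "Lc n m (e, A + int n, - h, \<lambda>I. - w I - 1) x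
       = ((fst ?L + int n) mod (2 * int n), (- snd ?L - 1) mod int m)"
    proof -
      have 1: "(e * fst x + (A + int n)) mod (2 * int n) = ((e * fst x + A) mod (2 * int n) + int n) mod (2 * int n)"
        by (metis mod_add_left_eq add.assoc)
      have 2: "(- h * snd x + (- w (fst x) - 1)) mod int m = (- ((h * snd x + w (fst x)) mod int m) - 1) mod int m"
      proof -
        have "(- ((h * snd x + w (fst x)) mod int m) - 1) mod int m = (- (h * snd x + w (fst x)) - 1) mod int m"
          by (metis mod_diff_left_eq mod_minus_eq)
        then show ?thesis by (simp add: algebra_simps)
      qed
      show ?thesis using 1 2 by (simp add: Lc_def)
    qed
    then show ?thesis using prj_tau[OF Lc_rng] by simp
  qed
  then show ?thesis by (simp add: Fm_def)
qed

definition norm :: "prm \<Rightarrow> prm" where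
  "norm P = (case P of (e,A,h,w) \<Rightarrow> if A mod (2 * int n) < int n
      then (e, A mod (2 * int n), h, Wf h (w 0 mod int m) (w 1 mod int m))
      else (e, A mod (2 * int n) - int n, - h, Wf (- h) ((- w 0 - 1) mod int m) ((- w 1 - 1) mod int m)))"

lemma Wf_mod:
  assumes "a mod int m = a' mod int m" "b mod int m = b' mod int m"
  shows "Wf h a b I mod int m = Wf h a' b' I mod int m"
proof -
  have "(h - 1 - a) mod int m = (h - 1 - a') mod int m"
    by (metis assms(1) mod_diff_right_eq)
  moreover have "(h - 1 - b) mod int m = (h - 1 - b') mod int m"
    by (metis assms(2) mod_diff_right_eq)
  ultimately show ?thesis using assms unfolding Wf_def by simp
qed

lemma Fm_norm:
  assumes "valid P" shows "Fm n m (norm P) = Fm n m P"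
proof -
  obtain e A h w where P: "P = (e,A,h,w)" by (cases P) auto
  have w: "\<forall>I::int. w (I + 2) = h - 1 - w I" using assms P by (auto simp: valid_def)
  show ?thesis
  proof (cases "A mod (2 * int n) < int n")
    case True
    have "Fm n m (e, A mod (2 * int n), h, Wf h (w 0 mod int m) (w 1 mod int m)) = Fm n m (e, A, h, w)"
    proof (rule Fm_cong)
      show "\<forall>I. Wf h (w 0 mod int m) (w 1 mod int m) I mod int m = w I mod int m"
      proof
        fix I
        have "Wf h (w 0 mod int m) (w 1 mod int m) I mod int m = Wf h (w 0) (w 1) I mod int m"
          by (rule Wf_mod) simp_all
        then show "Wf h (w 0 mod int m) (w 1 mod int m) I mod int m = w I mod int m"
          using valid_Wf[OF w, of I] by simp
      qed
    qed simp
    then show ?thesis using True by (simp add: P norm_def)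
  next
    case False
    have "Fm n m (e, A mod (2 * int n) - int n, - h, Wf (- h) ((- w 0 - 1) mod int m) ((- w 1 - 1) mod int m))
        = Fm n m (e, A + int n, - h, \<lambda>I. - w I - 1)"
    proof (rule Fm_cong)
      show "(A mod (2 * int n) - int n) mod (2 * int n) = (A + int n) mod (2 * int n)"
      proof -
        have "A mod (2 * int n) - int n = (A mod (2 * int n) + int n) + (-1) * (2 * int n)" by simp
        then have "(A mod (2 * int n) - int n) mod (2 * int n) = (A mod (2 * int n) + int n) mod (2 * int n)"
          by (metis mod_mult_self1)
        then show ?thesis by (simp add: mod_simps)
      qed
      have ex: "- w I - 1 = Wf (- h) (- w 0 - 1) (- w 1 - 1) I" for I
        using valid_Wf[OF w, of I] by (simp add: Wf_def)
      show "\<forall>I. Wf (- h) ((- w 0 - 1) mod int m) ((- w 1 - 1) mod int m) I mod int m = (- w I - 1) mod int m"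
      proof
        fix I show "Wf (- h) ((- w 0 - 1) mod int m) ((- w 1 - 1) mod int m) I mod int m = (- w I - 1) mod int m"
          unfolding ex[of I] by (rule Wf_mod) simp_all
      qed
    qed
    moreover have "Fm n m (norm P) = Fm n m (e, A mod (2 * int n) - int n, - h, Wf (- h) ((- w 0 - 1) mod int m) ((- w 1 - 1) mod int m))"
      using False by (simp add: P norm_def)
    ultimately show ?thesis unfolding P using Fm_tauP[of e A h w] by metis
  qed
qed

definition Nset :: "prm set" where
  "Nset = (\<lambda>(e,A,h,a,b). (e, A, h, Wf h a b)) ` ({1,-1} \<times> {0..<int n} \<times> {1,-1} \<times> {0..<int m} \<times> {0..<int m})"

lemma Nset_valid: "Q \<in> Nset \<Longrightarrow> valid Q"
  using Wf_valid by (auto simp: Nset_def valid_def)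

lemma norm_N: assumes "valid P" shows "norm P \<in> Nset"
proof -
  obtain e A h w where P: "P = (e,A,h,w)" by (cases P) auto
  have e: "e = 1 \<or> e = -1" and h: "h = 1 \<or> h = -1" using assms P by (auto simp: valid_def)
  have b: "0 \<le> A mod (2 * int n)" "A mod (2 * int n) < 2 * int n" using npos by auto
  have m: "0 \<le> x mod int m" "x mod int m < int m" for x using mpos by auto
  show ?thesis
  proof (cases "A mod (2 * int n) < int n")
    case True
    then show ?thesis using e h b m unfolding Nset_def norm_def P
      by (auto intro!: image_eqI[where x="(e, A mod (2 * int n), h, w 0 mod int m, w 1 mod int m)"])
  next
    case False
    then show ?thesis using e h b m unfolding Nset_def norm_def P
      by (auto intro!: image_eqI[where x="(e, A mod (2 * int n) - int n, - h, (- w 0 - 1) mod int m, (- w 1 - 1) mod int m)"])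
  qed
qed

lemma card_N: "card Nset = 4 * m^2 * n"
proof -
  have inj: "inj_on (\<lambda>(e,A,h,a,b). (e, A, h, Wf h a b)) X" for X :: "(int \<times> int \<times> int \<times> int \<times> int) set"
  proof (rule inj_onI, clarsimp)
    fix h a b a' b' assume "Wf h a b = Wf h a' b'"
    then have "Wf h a b 0 = Wf h a' b' 0" "Wf h a b 1 = Wf h a' b' 1" by auto
    then show "a = a' \<and> b = b'" by (simp add: Wf_def)
  qed
  have c2: "card {1, -1::int} = 2" by simp
  show ?thesis unfolding Nset_def card_image[OF inj]
    by (simp add: card_cartesian_product c2 power2_eq_square)
qed

lemma prj_inj:
  assumes "x \<in> rng n m" "y \<in> rng n m" "prj n m x = prj n m y"
  shows "fst x mod int n = fst y mod int n \<and> (fst x = fst y \<longrightarrow> snd x = snd y)"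
proof -
  obtain I J where x: "x = (I, J)" by (cases x) auto
  obtain I' J' where y: "y = (I', J')" by (cases y) auto
  have r: "0 \<le> I" "I < 2 * int n" "0 \<le> J" "J < int m" "0 \<le> I'" "I' < 2 * int n" "0 \<le> J'" "J' < int m"
    using assms x y by (auto simp: rng_def)
  have m: "0 \<le> z mod int m" for z using mpos by auto
  have e: "prj n m (I, J) = prj n m (I', J')" using assms x y by simp
  show ?thesis
  proof (cases "I < int n"; cases "I' < int n")
    assume a: "I < int n" "I' < int n"
    then show ?thesis using e r by (simp add: x y prj_def eq_nat_nat_iff)
  next
    assume a: "I < int n" "\<not> I' < int n"
    then have "I = I' - int n" using e r by (simp add: prj_def eq_nat_nat_iff)
    then show ?thesis using a by (simp add: x y)
  next
    assume a: "\<not> I < int n" "I' < int n"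
    then have "I = I' + int n" using e r by (simp add: prj_def eq_nat_nat_iff)
    then show ?thesis using a r by (simp add: x y)
  next
    assume a: "\<not> I < int n" "\<not> I' < int n"
    then have "I = I'" "(- J - 1) mod int m = (- J' - 1) mod int m" using e r m[of "- J - 1"] m[of "-J'-1"]
      by (simp_all add: prj_def eq_nat_nat_iff)
    moreover have "J = J'"
      using neg_mod_m[of J] neg_mod_m[of J'] r calculation(2) by metis
    ultimately show ?thesis by (simp add: x y)
  qed
qed

lemma Fm_inj:
  assumes "P \<in> Nset" "Q \<in> Nset" "Fm n m P = Fm n m Q"
  shows "P = Q"
proof -
  obtain e A h a b where P: "P = (e, A, h, Wf h a b)" and Pb: "e = 1 \<or> e = -1" "0 \<le> A" "A < int n"
    "h = 1 \<or> h = -1" "0 \<le> a" "a < int m" "0 \<le> b" "b < int m"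
    using assms(1) by (auto simp: Nset_def)
  obtain e' A' h' a' b' where Q: "Q = (e', A', h', Wf h' a' b')" and Qb: "e' = 1 \<or> e' = -1" "0 \<le> A'" "A' < int n"
    "h' = 1 \<or> h' = -1" "0 \<le> a'" "a' < int m" "0 \<le> b'" "b' < int m"
    using assms(2) by (auto simp: Nset_def)
  have v: "(1,1) \<in> vset n m" "(1,2) \<in> vset n m" "(2,1) \<in> vset n m" using m3 n2 by (auto simp: vset_def)
  have AA: "A mod (2 * int n) = A" "A' mod (2 * int n) = A'" using Pb Qb by auto
  have "Fm n m P (1,1) = Fm n m Q (1,1)" using assms by simp
  then have "prj n m (A, a) = prj n m (A', a')" using v AA Pb Qb by (simp add: Fm_def P Q Lc_def Wf_def)
  then have 1: "A = A'" "a = a'" using Pb Qb by (auto simp: prj_def)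
  have "Fm n m P (1,2) = Fm n m Q (1,2)" using assms by simp
  then have "prj n m (A, (h + a) mod int m) = prj n m (A, (h' + a) mod int m)"
    using v AA Pb Qb 1 by (simp add: Fm_def P Q Lc_def Wf_def)
  then have "(h + a) mod int m = (h' + a) mod int m" using Pb mpos
    by (auto simp: prj_def eq_nat_nat_iff pos_mod_sign[OF mpos] add_nonneg_nonneg)
  then have "int m dvd h - h'" by (metis mod_eq_dvd_iff add_diff_cancel_right)
  then have 2: "h = h'"
  proof -
    assume d: "int m dvd h - h'"
    show ?thesis
    proof (rule ccontr)
      assume "h \<noteq> h'"
      then have "h - h' = 2 \<or> h - h' = -2" using Pb Qb by auto
      then have "int m dvd 2" using d by auto
      then have "int m \<le> 2" by (rule zdvd_imp_le) simp
      then show False using m3 by simp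
    qed
  qed
  have "Fm n m P (2,1) = Fm n m Q (2,1)" using assms by simp
  then have 3: "prj n m ((e + A) mod (2 * int n), b) = prj n m ((e' + A) mod (2 * int n), b')"
    using v Pb Qb 1 by (simp add: Fm_def P Q Lc_def Wf_def)
  have r: "((e + A) mod (2 * int n), b) \<in> rng n m" "((e' + A) mod (2 * int n), b') \<in> rng n m"
    using Pb Qb npos by (auto simp: rng_def)
  from prj_inj[OF r 3] have 4: "(e + A) mod (2 * int n) mod int n = (e' + A) mod (2 * int n) mod int n"
    and 5: "(e + A) mod (2 * int n) = (e' + A) mod (2 * int n) \<longrightarrow> b = b'" by auto
  from 4 have "(e + A) mod int n = (e' + A) mod int n" by (simp add: mod_mod_cancel)
  then have "int n dvd e - e'" by (metis mod_eq_dvd_iff add_diff_cancel_right)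
  then have 6: "e = e'"
  proof -
    assume d: "int n dvd e - e'"
    show ?thesis
    proof (rule ccontr)
      assume "e \<noteq> e'"
      then have "e - e' = 2 \<or> e - e' = -2" using Pb Qb by auto
      then have "int n dvd 2" using d by auto
      then have "int n \<le> 2" by (rule zdvd_imp_le) simp
      then show False using n2 by simp
    qed
  qed
  then have "b = b'" using 5 by simp
  then show ?thesis using 1 2 6 by (simp add: P Q)
qed

lemma Fm_eq_iff: "valid P \<Longrightarrow> valid Q \<Longrightarrow> Fm n m P = Fm n m Q \<longleftrightarrow> norm P = norm Q"
  using Fm_inj[OF norm_N norm_N] Fm_norm by metis

definition "s1 = ((1::int), (1::int), (1::int), (\<lambda>_::int. 0::int))"
definition "s2 = ((-1::int), (0::int), (-1::int), Wf (-1) 0 0)"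

lemma valid_s: "valid s1" "valid s2"
  using Wf_valid by (auto simp: valid_def s1_def s2_def)

lemma sigma1_Fm: "sigma1 n m = Fm n m s1"
proof
  fix v show "sigma1 n m v = Fm n m s1 v"
  proof (cases "v \<in> vset n m")
    case False then show ?thesis by (simp add: sigma1_def aut_def Fm_def)
  next
    case True
    obtain i j where v: "v = (i, j)" by (cases v) auto
    have b: "1 \<le> i" "i \<le> n" "1 \<le> j" "j \<le> m" using True v by (auto simp: vset_def)
    have F: "Fm n m s1 v = prj n m (int i mod (2 * int n), int j - 1)"
      using True b by (simp add: Fm_def v s1_def Lc_def)
    have im: "int i mod (2 * int n) = int i" using b by simp
    show ?thesis
    proof (cases "i = n")
      case False
      then have "i < n" using b by simp
      then show ?thesis unfolding F im using True b
        by (simp add: sigma1_def aut_def v rperm_def prj_def)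
    next
      case True': True
      have "cinv m (tperm m j) = nat ((- int j) mod int m + 1)"
      proof (cases "j = 1")
        case True
        have "(- 1) mod int m = int m - 1" using m3 by (simp add: zmod_minus1)
        then show ?thesis using True m3 by (simp add: cinv_def tperm_def)
      next
        case False
        then have j2: "j \<ge> 2" using b by simp
        have "tperm m j = m + 2 - j" using False by (simp add: tperm_def)
        then have "cinv m (tperm m j) = (2 * m - j) mod m + 1" using j2 b by (simp add: cinv_def mult_2)
        moreover have "int ((2 * m - j) mod m) = (- int j) mod int m"
        proof -
          have "int ((2 * m - j) mod m) = (2 * int m - int j) mod int m"
            using b by (simp add: of_nat_mod of_nat_diff)
          also have "\<dots> = (- int j + 2 * int m) mod int m" by (simp add: algebra_simps)
          also have "\<dots> = (- int j) mod int m" by (rule mod_mult_self1)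
          finally show ?thesis .
        qed
        ultimately show ?thesis by (metis nat_int of_nat_1 of_nat_add nat_int_add)
      qed
      then show ?thesis unfolding F im using True b True'
        by (simp add: sigma1_def aut_def v rperm_def prj_def pmul_def)
    qed
  qed
qed

lemma sigma2_Fm: "sigma2 n m = Fm n m s2"
proof
  fix v show "sigma2 n m v = Fm n m s2 v"
  proof (cases "v \<in> vset n m")
    case False then show ?thesis by (simp add: sigma2_def aut_def Fm_def)
  next
    case True
    obtain i j where v: "v = (i, j)" by (cases v) auto
    have b: "1 \<le> i" "i \<le> n" "1 \<le> j" "j \<le> m" using True v by (auto simp: vset_def)
    define W where "W = Wf (-1) 0 0 (int i - 1)"
    have F: "Fm n m s2 v = prj n m ((1 - int i) mod (2 * int n), (1 - int j + W) mod int m)"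
      using True b by (simp add: Fm_def v s2_def Lc_def W_def)
    show ?thesis
    proof (cases "i = 1")
      case True': True
      have W0: "W = 0" using True' by (simp add: W_def Wf_def)
      have "tperm m j = nat ((1 - int j) mod int m + 1)"
      proof (cases "j = 1")
        case True then show ?thesis by (simp add: tperm_def)
      next
        case False
        then have "(1 - int j) mod int m = 1 - int j + int m"
        proof -
          have "(1 - int j) mod int m = (1 - int j + int m) mod int m" by simp
          also have "\<dots> = 1 - int j + int m" using b False by (intro mod_pos_pos_trivial) auto
          finally show ?thesis .
        qed
        then show ?thesis using False b by (simp add: tperm_def)
      qed
      then show ?thesis unfolding F W0 using True b True'
        by (simp add: sigma2_def aut_def v zperm_def prj_def)
    next
      case False
      then have i2: "i \<ge> 2" using b by simp
      have im: "(1 - int i) mod (2 * int n) = 1 - int i + 2 * int n"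
      proof -
        have "(1 - int i) mod (2 * int n) = (1 - int i + 2 * int n) mod (2 * int n)" by simp
        also have "\<dots> = 1 - int i + 2 * int n" using b i2 by (intro mod_pos_pos_trivial) auto
        finally show ?thesis .
      qed
      have fib: "(- ((1 - int j + W) mod int m) - 1) mod int m = (int j - 2 - W) mod int m"
      proof -
        have "(- ((1 - int j + W) mod int m) - 1) mod int m = (- (1 - int j + W) - 1) mod int m"
          by (metis mod_diff_left_eq mod_minus_eq)
        then show ?thesis by (simp add: algebra_simps)
      qed
      have z: "zperm n i = n + 2 - i" using False by (simp add: zperm_def)
      have Wv: "W = (if i mod 4 = 1 \<or> i mod 4 = 2 then 0 else -2)"
        unfolding W_def Wf_def using b by presburger
      have "beta m i j = nat ((int j - 2 - W) mod int m + 1)"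
      proof (cases "i mod 4 = 1 \<or> i mod 4 = 2")
        case True
        have "int ((j + m - 2) mod m) = (int j - 2 + 1 * int m) mod int m"
          using b m3 by (simp add: of_nat_mod of_nat_diff algebra_simps)
        also have "\<dots> = (int j - 2) mod int m" by (rule mod_mult_self1)
        finally have "int ((j + m - 2) mod m) = (int j - 2) mod int m" .
        then have "(j + m - 2) mod m + 1 = nat ((int j - 2) mod int m + 1)" by linarith
        then show ?thesis using True Wv by (auto simp: beta_def cinv_def)
      next
        case False
        then have "i mod 4 = 0 \<or> i mod 4 = 3" by presburger
        moreover have "j mod m + 1 = nat (int j mod int m + 1)" by (simp add: of_nat_mod[symmetric] nat_int_add)
        ultimately show ?thesis using False Wv by (auto simp: beta_def cperm_def)
      qed
      then show ?thesis unfolding F im using True b False fib z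
        by (simp add: sigma2_def aut_def v prj_def)
    qed
  qed
qed

lemma pmult_assoc: "pmult (pmult P Q) R = pmult P (pmult Q R)"
  by (cases P, cases Q, cases R) (simp add: pmult_def algebra_simps)

lemma monBG: "monoid BG" using grpBG by (rule group.is_monoid)

lemma powS: "x [^]\<^bsub>BG\<^esub> Suc k = x [^]\<^bsub>BG\<^esub> k \<otimes>\<^bsub>BG\<^esub> x"
  by (rule monoid.nat_pow_Suc[OF monBG])

lemma pow0: "x [^]\<^bsub>BG\<^esub> (0::nat) = \<one>\<^bsub>BG\<^esub>"
  by (rule monoid.nat_pow_0[OF monBG])

abbreviation "GG \<equiv> generate BG {sigma1 n m, sigma2 n m}"

lemma gen_pow: "x \<in> GG \<Longrightarrow> x [^]\<^bsub>BG\<^esub> (k::nat) \<in> GG"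
  by (induction k) (simp_all add: powS pow0 generate.one generate.eng)

lemma s1_G: "Fm n m s1 \<in> GG" and s2_G: "Fm n m s2 \<in> GG"
  by (simp_all add: sigma1_Fm[symmetric] sigma2_Fm[symmetric] generate.incl)

lemma valid_simple: "valid (1, A, 1, \<lambda>_. 0)" by (simp add: valid_def)

lemma pow_s1: "Fm n m s1 [^]\<^bsub>BG\<^esub> k = Fm n m (1, int k, 1, \<lambda>_. 0)"
proof (induction k)
  case 0 then show ?case by (simp add: pow0 Fm_one pid_def)
next
  case (Suc k)
  then show ?case by (simp add: powS Fm_mult valid_simple valid_s) (simp add: pmult_def s1_def)
qed

definition T :: "int \<Rightarrow> int \<Rightarrow> prm" where "T x y = (1, 0, 1, Wf 1 x y)"

lemma valid_T: "valid (T x y)" using Wf_valid by (simp add: T_def valid_def)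

lemma Wf100: "Wf 1 0 0 = (\<lambda>_. 0)" by (rule ext) (simp add: Wf_def)

lemma Wf_add1: "Wf 1 a b I + Wf 1 a' b' I = Wf 1 (a + a') (b + b') I"
  by (simp add: Wf_def)

lemma pmult_T: "pmult (T a b) (T a' b') = T (a + a') (b + b')"
  by (simp add: T_def pmult_def Wf_add1 add.commute)

lemma s2s2: "pmult s2 s2 = T 0 (-2)"
proof -
  have "- Wf (- 1) 0 0 I + Wf (- 1) 0 0 (- I) = Wf 1 0 (-2) I" for I
    unfolding Wf_def by presburger
  then show ?thesis by (simp add: s2_def T_def pmult_def)
qed

lemma pow_s2_even: "Fm n m s2 [^]\<^bsub>BG\<^esub> (2 * k) = Fm n m (T 0 (- 2 * int k))"
proof (induction k)
  case 0 then show ?case by (simp add: pow0 Fm_one pid_def T_def Wf100)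
next
  case (Suc k)
  have "Fm n m s2 [^]\<^bsub>BG\<^esub> (2 * Suc k) = (Fm n m s2 [^]\<^bsub>BG\<^esub> (2 * k) \<otimes>\<^bsub>BG\<^esub> Fm n m s2) \<otimes>\<^bsub>BG\<^esub> Fm n m s2"
    by (simp add: powS)
  also have "\<dots> = Fm n m (T 0 (- 2 * int (Suc k)))"
    using Suc valid_T valid_s
    by (simp add: Fm_mult valid_pmult pmult_assoc s2s2 pmult_T algebra_simps)
  finally show ?case .
qed

lemma T0_G: "Fm n m (T 0 y) \<in> GG"
proof -
  obtain k :: nat where k: "int k = ((int m - 1) div 2 * y) mod int m"
    using mpos by (metis pos_mod_sign zero_le_imp_eq_int)
  have odd: "2 * ((int m - 1) div 2) = int m - 1" using modd by presburger
  have "(- 2 * int k) mod int m = y mod int m"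
  proof -
    have "(- 2 * int k) mod int m = (- 2 * ((int m - 1) div 2 * y)) mod int m"
      unfolding k by (metis mod_mult_right_eq)
    also have "- 2 * ((int m - 1) div 2 * y) = - (2 * ((int m - 1) div 2)) * y"
      by (simp add: algebra_simps)
    also have "\<dots> = - (int m - 1) * y" by (simp only: odd)
    also have "\<dots> = y + (- y) * int m" by (simp add: algebra_simps)
    also have "(y + (- y) * int m) mod int m = y mod int m" by (rule mod_mult_self1)
    finally show ?thesis .
  qed
  then have "Fm n m (T 0 (- 2 * int k)) = Fm n m (T 0 y)"
    unfolding T_def by (intro Fm_cong) (auto intro: Wf_mod)
  then show ?thesis using pow_s2_even[of k] gen_pow[OF s2_G] by metis
qed

lemma Tx0_G: "Fm n m (T x 0) \<in> GG"
proof -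
  have mem: "Fm n m s1 [^]\<^bsub>BG\<^esub> (2 * n - 1) \<otimes>\<^bsub>BG\<^esub> Fm n m (T 0 x) \<otimes>\<^bsub>BG\<^esub> Fm n m s1 \<in> GG"
    by (intro generate.eng gen_pow s1_G T0_G)
  have "Fm n m s1 [^]\<^bsub>BG\<^esub> (2 * n - 1) \<otimes>\<^bsub>BG\<^esub> Fm n m (T 0 x) \<otimes>\<^bsub>BG\<^esub> Fm n m s1
      = Fm n m (pmult (pmult (1, int (2 * n - 1), 1, \<lambda>_. 0) (T 0 x)) s1)"
    by (simp add: pow_s1 Fm_mult valid_simple valid_T valid_s valid_pmult)
  also have "pmult (pmult (1, int (2 * n - 1), 1, \<lambda>_. 0) (T 0 x)) s1 = (1, 2 * int n, 1, \<lambda>I. Wf 1 0 x (I + 1))"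
    using npos by (simp add: pmult_def T_def s1_def of_nat_diff add.commute)
  also have "Fm n m (1, 2 * int n, 1, \<lambda>I. Wf 1 0 x (I + 1)) = Fm n m (T x 0)"
    unfolding T_def
  proof (rule Fm_cong)
    show "\<forall>I. Wf 1 0 x (I + 1) mod int m = Wf 1 x 0 I mod int m"
    proof
      fix I have "Wf 1 0 x (I + 1) = Wf 1 x 0 I" unfolding Wf_def by presburger
      then show "Wf 1 0 x (I + 1) mod int m = Wf 1 x 0 I mod int m" by simp
    qed
  qed simp
  finally show ?thesis using mem by simp
qed

lemma T_G: "Fm n m (T x y) \<in> GG"
proof -
  have "Fm n m (T x 0) \<otimes>\<^bsub>BG\<^esub> Fm n m (T 0 y) \<in> GG" by (intro generate.eng Tx0_G T0_G)
  then show ?thesis by (simp add: Fm_mult valid_T pmult_T)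
qed

lemma flip_G: "Fm n m (1, 0, -1, \<lambda>_. -1) \<in> GG"
proof -
  have "Fm n m s1 [^]\<^bsub>BG\<^esub> n = Fm n m (1, int n, 1, \<lambda>_. 0)" by (rule pow_s1)
  also have "\<dots> = Fm n m (1, int n + int n, - 1, \<lambda>I. - 0 - 1)" by (rule Fm_tauP)
  also have "\<dots> = Fm n m (1, 0, -1, \<lambda>_. -1)" by (rule Fm_cong) auto
  finally show ?thesis using gen_pow[OF s1_G, of n] by simp
qed

lemma ker_G:
  assumes "valid (1, 0, h, w)" shows "Fm n m (1, 0, h, w) \<in> GG"
proof -
  have w: "\<forall>I::int. w (I + 2) = h - 1 - w I" and h: "h = 1 \<or> h = -1" using assms by (auto simp: valid_def)
  have wW: "w = Wf h (w 0) (w 1)" by (intro ext) (rule valid_Wf[OF w])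
  show ?thesis using h
  proof
    assume "h = 1"
    moreover have "Wf h (w 0) (w 1) = w" using wW[symmetric] .
    ultimately have "(1, 0, h, w) = T (w 0) (w 1)" by (simp add: T_def)
    then show ?thesis using T_G by simp
  next
    assume h1: "h = -1"
    have "Fm n m (T (w 0 + 1) (w 1 + 1)) \<otimes>\<^bsub>BG\<^esub> Fm n m (1, 0, -1, \<lambda>_. -1) \<in> GG"
      by (intro generate.eng T_G flip_G)
    moreover have "Fm n m (T (w 0 + 1) (w 1 + 1)) \<otimes>\<^bsub>BG\<^esub> Fm n m (1, 0, -1, \<lambda>_. -1)
       = Fm n m (pmult (T (w 0 + 1) (w 1 + 1)) (1, 0, -1, \<lambda>_. -1))"
      by (rule Fm_mult[OF valid_T]) (simp add: valid_def)
    moreover have "pmult (T (w 0 + 1) (w 1 + 1)) (1, 0, -1, \<lambda>_. -1) = (1, 0, h, w)"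
    proof -
      have "- 1 + Wf 1 (w 0 + 1) (w 1 + 1) I = w I" for I
        using valid_Wf[OF w, of I] h1 by (simp add: Wf_def)
      then show ?thesis using h1 by (simp add: pmult_def T_def)
    qed
    ultimately show ?thesis by simp
  qed
qed

lemma pmult_pid: "pmult P pid = P"
  by (cases P) (simp add: pmult_def pid_def)

lemma all_G:
  assumes "valid P" shows "Fm n m P \<in> GG"
proof -
  obtain e A h w where P: "P = (e,A,h,w)" by (cases P) auto
  have e: "e = 1 \<or> e = -1" and h: "h = 1 \<or> h = -1" using assms P by (auto simp: valid_def)
  obtain k :: nat where k: "int k = A mod (2 * int n)"
    using npos by (metis pos_mod_sign zero_le_imp_eq_int mult_pos_pos zero_less_numeral)
  have P': "Fm n m P = Fm n m (e, int k, h, w)" unfolding P k by (rule Fm_cong) auto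
  have vP': "valid (e, int k, h, w)" using assms P by (simp add: valid_def)
  define E where "E = (e, int k, e, Wf e 0 0)"
  have vE: "valid E" using e Wf_valid by (auto simp: E_def valid_def)
  have EG: "Fm n m E \<in> GG" using e
  proof
    assume "e = 1" then show ?thesis using gen_pow[OF s1_G, of k] by (simp add: pow_s1 E_def Wf100)
  next
    assume e1: "e = -1"
    have "Fm n m s1 [^]\<^bsub>BG\<^esub> k \<otimes>\<^bsub>BG\<^esub> Fm n m s2 \<in> GG" by (intro generate.eng gen_pow s1_G s2_G)
    then show ?thesis using e1
      by (simp add: pow_s1 Fm_mult valid_simple valid_s) (simp add: pmult_def s2_def E_def)
  qed
  define K where "K = pmult (e, int k, h, w) (pinv E)"
  have vK: "valid K" unfolding K_def by (intro valid_pmult valid_pinv vP' vE)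
  obtain eK AK hK wK where Kd: "K = (eK, AK, hK, wK)" by (cases K) auto
  have "eK = 1" "AK = 0" using Kd e by (auto simp: K_def E_def pmult_def pinv_def)
  then have KG: "Fm n m K \<in> GG" using ker_G vK Kd by simp
  have "Fm n m K \<otimes>\<^bsub>BG\<^esub> Fm n m E = Fm n m (pmult K E)" by (rule Fm_mult[OF vK vE])
  also have "pmult K E = (e, int k, h, w)" by (simp add: K_def pmult_assoc pinv_l[OF vE] pmult_pid)
  finally have "Fm n m K \<otimes>\<^bsub>BG\<^esub> Fm n m E = Fm n m (e, int k, h, w)" .
  then show ?thesis using P' generate.eng[OF KG EG] by simp
qed

lemma G_eq: "GG = Fm n m ` Nset"
proof
  show "GG \<subseteq> Fm n m ` Nset"
  proof
    fix x assume "x \<in> GG"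
    then have "\<exists>P. valid P \<and> x = Fm n m P"
    proof (induction rule: generate.induct)
      case one then show ?case using valid_pid Fm_one by blast
    next
      case (incl h) then show ?case using valid_s sigma1_Fm sigma2_Fm by blast
    next
      case (inv h)
      then have "\<exists>P. valid P \<and> h = Fm n m P" using valid_s sigma1_Fm sigma2_Fm by blast
      then show ?case using Fm_inv valid_pinv by blast
    next
      case (eng h1 h2) then show ?case using Fm_mult valid_pmult by blast
    qed
    then obtain P where "valid P" "x = Fm n m P" by blast
    then show "x \<in> Fm n m ` Nset" using norm_N Fm_norm by (metis image_eqI)
  qed
  show "Fm n m ` Nset \<subseteq> GG" using all_G Nset_valid by blast
qed

lemma card_G: "card GG = 4 * m^2 * n"
proof -
  have "inj_on (Fm n m) Nset" using Fm_inj by (rule inj_onI)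
  then show ?thesis using G_eq card_N card_image by metis
qed

lemma Wf01 [simp]: "Wf h a b 0 = a" "Wf h a b 1 = b" by (simp_all add: Wf_def)

lemma pid_pmult: "pmult pid P = P"
  by (cases P) (simp add: pmult_def pid_def)

lemma norm_fst: "fst (norm P) = fst P"
  by (cases P) (simp add: norm_def)

lemma norm_pid: "norm pid = (1, 0, 1, Wf 1 0 0)"
  using npos by (simp add: norm_def pid_def)

lemma one_iff: "valid P \<Longrightarrow> Fm n m P = \<one>\<^bsub>BG\<^esub> \<longleftrightarrow> norm P = (1, 0, 1, Wf 1 0 0)"
  using Fm_eq_iff[OF _ valid_pid] by (simp add: Fm_one norm_pid)

lemma s1_carr: "sigma1 n m \<in> carrier BG" and s2_carr: "sigma2 n m \<in> carrier BG"
  by (simp_all add: sigma1_Fm sigma2_Fm Fm_carr valid_s)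

lemma ord1: "group.ord BG (sigma1 n m) = 2 * n"
proof -
  have "sigma1 n m [^]\<^bsub>BG\<^esub> k = \<one>\<^bsub>BG\<^esub> \<longleftrightarrow> 2 * n dvd k" for k
  proof -
    have "sigma1 n m [^]\<^bsub>BG\<^esub> k = \<one>\<^bsub>BG\<^esub> \<longleftrightarrow> norm (1, int k, 1, \<lambda>_. 0) = (1, 0, 1, Wf 1 0 0)"
      unfolding sigma1_Fm pow_s1 by (rule one_iff[OF valid_simple])
    also have "\<dots> \<longleftrightarrow> int k mod (2 * int n) = 0"
      using npos by (auto simp: norm_def)
    also have "\<dots> \<longleftrightarrow> 2 * n dvd k"
      by (metis dvd_eq_mod_eq_0 of_nat_dvd_iff of_nat_mult of_nat_numeral)
    finally show ?thesis .
  qed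
  then show ?thesis using group.ord_unique[OF grpBG s1_carr] by blast
qed

lemma ord2: "group.ord BG (sigma2 n m) = 2 * m"
proof -
  have "sigma2 n m [^]\<^bsub>BG\<^esub> k = \<one>\<^bsub>BG\<^esub> \<longleftrightarrow> 2 * m dvd k" for k
  proof -
    define q where "q = k div 2"
    define r where "r = k mod 2"
    have k: "k = 2 * q + r" by (simp add: q_def r_def)
    have r: "r = 0 \<or> r = 1" by (auto simp: r_def)
    show ?thesis using r
    proof
      assume r0: "r = 0"
      have "sigma2 n m [^]\<^bsub>BG\<^esub> k = \<one>\<^bsub>BG\<^esub> \<longleftrightarrow> norm (T 0 (- 2 * int q)) = (1, 0, 1, Wf 1 0 0)"
        unfolding sigma2_Fm k r0 using pow_s2_even[of q] one_iff[OF valid_T] by simp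
      also have "\<dots> \<longleftrightarrow> (- 2 * int q) mod int m = 0"
      proof
        assume "norm (T 0 (- 2 * int q)) = (1, 0, 1, Wf 1 0 0)"
        then have "Wf 1 0 ((- 2 * int q) mod int m) = Wf 1 0 0" using npos by (simp add: norm_def T_def)
        then have "Wf 1 0 ((- 2 * int q) mod int m) 1 = Wf 1 0 0 1" by simp
        then show "(- 2 * int q) mod int m = 0" by (simp add: Wf_def)
      next
        assume "(- 2 * int q) mod int m = 0"
        then show "norm (T 0 (- 2 * int q)) = (1, 0, 1, Wf 1 0 0)" using npos by (simp add: norm_def T_def)
      qed
      also have "\<dots> \<longleftrightarrow> int m dvd 2 * int q"
        by (metis dvd_minus_iff mod_0_imp_dvd dvd_imp_mod_0 mult_minus_left)
      also have "\<dots> \<longleftrightarrow> m dvd q"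
      proof -
        have "coprime (int m) 2" using modd by (simp add: coprime_commute)
        then show ?thesis by (metis coprime_dvd_mult_right_iff of_nat_dvd_iff)
      qed
      also have "\<dots> \<longleftrightarrow> 2 * m dvd k" using k r0 by simp
      finally show ?thesis .
    next
      assume r1: "r = 1"
      have "sigma2 n m [^]\<^bsub>BG\<^esub> k = Fm n m (T 0 (- 2 * int q)) \<otimes>\<^bsub>BG\<^esub> Fm n m s2"
        unfolding sigma2_Fm k r1 by (simp add: powS pow_s2_even)
      also have "\<dots> = Fm n m (pmult (T 0 (- 2 * int q)) s2)" by (rule Fm_mult[OF valid_T valid_s(2)])
      finally have "sigma2 n m [^]\<^bsub>BG\<^esub> k \<noteq> \<one>\<^bsub>BG\<^esub>"
        using one_iff[OF valid_pmult[OF valid_T valid_s(2)]] norm_fst[of "pmult (T 0 (- 2 * int q)) s2"]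
        by (auto simp: pmult_def T_def s2_def)
      moreover have "\<not> 2 * m dvd k"
      proof
        assume "2 * m dvd k"
        then have "2 dvd k" by (rule dvd_mult_left)
        then show False using k r1 by simp
      qed
      ultimately show ?thesis by simp
    qed
  qed
  then show ?thesis using group.ord_unique[OF grpBG s2_carr] by blast
qed

lemma ord3: "group.ord BG (sigma2 n m \<otimes>\<^bsub>BG\<^esub> sigma1 n m) = 2"
proof -
  define X where "X = pmult s2 s1"
  have vX: "valid X" unfolding X_def by (intro valid_pmult valid_s)
  have eq: "sigma2 n m \<otimes>\<^bsub>BG\<^esub> sigma1 n m = Fm n m X"
    unfolding sigma1_Fm sigma2_Fm X_def by (rule Fm_mult[OF valid_s(2,1)])
  have carr: "Fm n m X \<in> carrier BG" using Fm_carr[OF vX] .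
  have XX: "pmult X X = pid"
  proof -
    have "- Wf (- 1) 0 0 (I + 1) + Wf (- 1) 0 0 (- I) = 0" for I
      unfolding Wf_def by presburger
    then show ?thesis by (simp add: X_def s1_def s2_def pmult_def pid_def add.commute)
  qed
  have "Fm n m X [^]\<^bsub>BG\<^esub> (2::nat) = \<one>\<^bsub>BG\<^esub>"
    using XX vX by (simp add: numeral_2_eq_2 powS pow0 Fm_one Fm_mult valid_pid pid_pmult)
  then have d: "group.ord BG (Fm n m X) dvd 2" using group.pow_eq_id[OF grpBG carr] by blast
  have "Fm n m X \<noteq> \<one>\<^bsub>BG\<^esub>"
    using one_iff[OF vX] norm_fst[of X] by (auto simp: X_def pmult_def s1_def s2_def)
  then have "group.ord BG (Fm n m X) \<noteq> 1" using group.ord_eq_1[OF grpBG carr] by blast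
  moreover have "group.ord BG (Fm n m X) \<noteq> 0" using d by (metis dvd_0_left_iff zero_neq_numeral)
  moreover have "group.ord BG (Fm n m X) \<le> 2" by (rule dvd_imp_le[OF d]) simp
  ultimately have "group.ord BG (Fm n m X) = 2" by linarith
  then show ?thesis using eq by simp
qed

end

theorem lemma5p4:
  fixes m s n :: nat
  assumes "m \<ge> 3" and "odd m"
    and "s > 0" and "even s" and "\<not> 4 dvd s"
    and "n = s * m"
  shows "group.ord (BijGroup (vset n m)) (sigma1 n m) = 2 * n
       \<and> group.ord (BijGroup (vset n m)) (sigma2 n m) = 2 * m
       \<and> group.ord (BijGroup (vset n m))
            (sigma2 n m \<otimes>\<^bsub>BijGroup (vset n m)\<^esub> sigma1 n m) = 2
       \<and> card (generate (BijGroup (vset n m)) {sigma1 n m, sigma2 n m}) = 4 * m^2 * n"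
proof -
  have "s = 4 * (s div 4) + 2" using assms(4,5) by presburger
  then obtain a where a: "s = 4 * a + 2" by blast
  obtain b where b: "m = 2 * b + 1" using assms(2) by (metis oddE)
  have "n = 4 * (2 * a * b + a + b) + 2" unfolding assms(6) a b by (simp add: algebra_simps)
  then have n4: "n mod 4 = 2" by presburger
  have "n \<ge> 2 * 3" unfolding assms(6) a using assms(1) by (intro mult_mono) auto
  then have n2: "n > 2" by simp
  interpret cov n m using n4 n2 assms(1,2) by unfold_locales
  show ?thesis using ord1 ord2 ord3 card_G by simp
qed

end
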